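(* Let $\mathbf A$ be a finite algebra belonging to a congruence modular variety with $\mathrm{typ}\{\mathbf A\}\subseteq\{\mathbf 4\}$, and let $\alpha$ be a join irreducible congruence of $\mathbf A$. Then (1) $a<\!>_\alpha b$ whenever $\{a,b\}$ is a $(\delta,\delta')$-minimal set for some covering pair $\delta\prec\delta'\le\alpha$ of congruences; (2) for every $a\in A$ the graph $(a/\alpha,<\!>_\alpha)$ is connected; (3) all unary polynomials of $\mathbf A$ preserve the relation $\le_\alpha$, and all polynomials of $\mathbf A$ preserve the transitive closure of $\le_\alpha$.
   Context: Tame congruence theory (Hobby–McKenzie): for congruences $\delta<\delta'$ of a finite algebra, $U_{\mathbf A}(\delta,\delta')$ is the set of all $f(A)$ with $f$ a unary polynomial and $f(\delta')\not\subseteq\delta$; its inclusion-minimal members are the $(\delta,\delta')$-minimal sets. $\mathrm{typ}\{\mathbf A\}$ is the set of types of all prime quotients; type $\mathbf 4$ is the lattice type. For a join irreducible congruence $\alpha$ let $\alpha^-$ be its unique lower cover; under the hypotheses an $(\alpha^-,\alpha)$-minimal set is a $2$-element set $\{0,1\}$ on which the induced algebra is polynomially equivalent to the $2$-element lattice; fix one and label it so that $0<1$ in that lattice order. Define $a\le_\alpha b$ iff there is a unary polynomial $f$ of $\mathbf A$ with $f(1)=b$ and $f(0)=a$. Write $a<\!>_\alpha b$ iff ($a\le_\alpha b$ or $b\le_\alpha a$) and $a\ne b$. "Belongs to a congruence modular variety" means the variety generated by $\mathbf A$ is congruence modular. *)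

theory Defs
  imports Main
begin

definition algebra :: "'a set \<Rightarrow> ('f \<Rightarrow> nat) \<Rightarrow> ('f \<Rightarrow> 'a list \<Rightarrow> 'a) \<Rightarrow> bool" where
  "algebra A ar op \<longleftrightarrow> A \<noteq> {} \<and>
     (\<forall>f xs. length xs = ar f \<and> set xs \<subseteq> A \<longrightarrow> op f xs \<in> A)"

definition tuples :: "'a set \<Rightarrow> nat \<Rightarrow> 'a list set" where
  "tuples A n = {xs. length xs = n \<and> set xs \<subseteq> A}"

inductive_set pol :: "'a set \<Rightarrow> ('f \<Rightarrow> nat) \<Rightarrow> ('f \<Rightarrow> 'a list \<Rightarrow> 'a) \<Rightarrow> nat \<Rightarrow> ('a list \<Rightarrow> 'a) set"
  for A ar op n where
  pol_proj: "i < n \<Longrightarrow> (\<lambda>xs. xs ! i) \<in> pol A ar op n"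
| pol_const: "c \<in> A \<Longrightarrow> (\<lambda>xs. c) \<in> pol A ar op n"
| pol_app: "length ps = ar f \<Longrightarrow> (\<forall>p\<in>set ps. p \<in> pol A ar op n)
     \<Longrightarrow> (\<lambda>xs. op f (map (\<lambda>p. p xs) ps)) \<in> pol A ar op n"

definition upol :: "'a set \<Rightarrow> ('f \<Rightarrow> nat) \<Rightarrow> ('f \<Rightarrow> 'a list \<Rightarrow> 'a) \<Rightarrow> ('a \<Rightarrow> 'a) set" where
  "upol A ar op = {(\<lambda>x. p [x]) | p. p \<in> pol A ar op 1}"

definition con :: "'a set \<Rightarrow> ('f \<Rightarrow> nat) \<Rightarrow> ('f \<Rightarrow> 'a list \<Rightarrow> 'a) \<Rightarrow> 'a rel \<Rightarrow> bool" where
  "con A ar op \<theta> \<longleftrightarrow> equiv A \<theta> \<and>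
     (\<forall>f xs ys. xs \<in> tuples A (ar f) \<and> ys \<in> tuples A (ar f) \<and>
        list_all2 (\<lambda>x y. (x, y) \<in> \<theta>) xs ys \<longrightarrow> (op f xs, op f ys) \<in> \<theta>)"

definition con_join :: "'a set \<Rightarrow> ('f \<Rightarrow> nat) \<Rightarrow> ('f \<Rightarrow> 'a list \<Rightarrow> 'a) \<Rightarrow> 'a rel \<Rightarrow> 'a rel \<Rightarrow> 'a rel" where
  "con_join A ar op \<beta> \<gamma> = \<Inter>{\<theta>. con A ar op \<theta> \<and> \<beta> \<union> \<gamma> \<subseteq> \<theta>}"

definition con_modular :: "'a set \<Rightarrow> ('f \<Rightarrow> nat) \<Rightarrow> ('f \<Rightarrow> 'a list \<Rightarrow> 'a) \<Rightarrow> bool" where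
  "con_modular A ar op \<longleftrightarrow>
     (\<forall>x y z. con A ar op x \<and> con A ar op y \<and> con A ar op z \<and> x \<subseteq> z \<longrightarrow>
        con_join A ar op x (y \<inter> z) = con_join A ar op x y \<inter> z)"

definition covers :: "'a set \<Rightarrow> ('f \<Rightarrow> nat) \<Rightarrow> ('f \<Rightarrow> 'a list \<Rightarrow> 'a) \<Rightarrow> 'a rel \<Rightarrow> 'a rel \<Rightarrow> bool" where
  "covers A ar op \<delta> \<delta>' \<longleftrightarrow> con A ar op \<delta> \<and> con A ar op \<delta>' \<and> \<delta> \<subset> \<delta>' \<and>
     \<not> (\<exists>\<theta>. con A ar op \<theta> \<and> \<delta> \<subset> \<theta> \<and> \<theta> \<subset> \<delta>')"

definition join_irreducible :: "'a set \<Rightarrow> ('f \<Rightarrow> nat) \<Rightarrow> ('f \<Rightarrow> 'a list \<Rightarrow> 'a) \<Rightarrow> 'a rel \<Rightarrow> bool" where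
  "join_irreducible A ar op \<alpha> \<longleftrightarrow> con A ar op \<alpha> \<and> \<alpha> \<noteq> Id_on A \<and>
     (\<forall>\<beta> \<gamma>. con A ar op \<beta> \<and> con A ar op \<gamma> \<and> \<alpha> = con_join A ar op \<beta> \<gamma> \<longrightarrow> \<alpha> = \<beta> \<or> \<alpha> = \<gamma>)"

text \<open>Variety generated by A is congruence modular: every subalgebra of every power
A^I (index set I of naturals, power realised as extensional functions) has a modular
congruence lattice.\<close>

definition pow_carrier :: "'a set \<Rightarrow> nat set \<Rightarrow> (nat \<Rightarrow> 'a) set" where
  "pow_carrier A I = {x. (\<forall>i\<in>I. x i \<in> A) \<and> (\<forall>i. i \<notin> I \<longrightarrow> x i = undefined)}"

definition pow_op :: "('f \<Rightarrow> 'a list \<Rightarrow> 'a) \<Rightarrow> nat set \<Rightarrow> 'f \<Rightarrow> (nat \<Rightarrow> 'a) list \<Rightarrow> (nat \<Rightarrow> 'a)" where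
  "pow_op op I f xs = (\<lambda>i. if i \<in> I then op f (map (\<lambda>x. x i) xs) else undefined)"

definition subuniverse :: "'b set \<Rightarrow> ('f \<Rightarrow> nat) \<Rightarrow> ('f \<Rightarrow> 'b list \<Rightarrow> 'b) \<Rightarrow> 'b set \<Rightarrow> bool" where
  "subuniverse B ar op S \<longleftrightarrow> S \<subseteq> B \<and>
     (\<forall>f xs. xs \<in> tuples S (ar f) \<longrightarrow> op f xs \<in> S)"

definition cm_variety :: "'a set \<Rightarrow> ('f \<Rightarrow> nat) \<Rightarrow> ('f \<Rightarrow> 'a list \<Rightarrow> 'a) \<Rightarrow> bool" where
  "cm_variety A ar op \<longleftrightarrow>
     (\<forall>I S. subuniverse (pow_carrier A I) ar (pow_op op I) S \<longrightarrow> con_modular S ar (pow_op op I))"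

definition U_sets :: "'a set \<Rightarrow> ('f \<Rightarrow> nat) \<Rightarrow> ('f \<Rightarrow> 'a list \<Rightarrow> 'a) \<Rightarrow> 'a rel \<Rightarrow> 'a rel \<Rightarrow> 'a set set" where
  "U_sets A ar op \<delta> \<delta>' = {f ` A | f. f \<in> upol A ar op \<and> \<not> ((\<lambda>(x, y). (f x, f y)) ` \<delta>' \<subseteq> \<delta>)}"

definition minimal_set :: "'a set \<Rightarrow> ('f \<Rightarrow> nat) \<Rightarrow> ('f \<Rightarrow> 'a list \<Rightarrow> 'a) \<Rightarrow> 'a rel \<Rightarrow> 'a rel \<Rightarrow> 'a set \<Rightarrow> bool" where
  "minimal_set A ar op \<delta> \<delta>' U \<longleftrightarrow> U \<in> U_sets A ar op \<delta> \<delta>' \<and>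
     (\<forall>V \<in> U_sets A ar op \<delta> \<delta>'. V \<subseteq> U \<longrightarrow> V = U)"

definition trace :: "'a set \<Rightarrow> ('f \<Rightarrow> nat) \<Rightarrow> ('f \<Rightarrow> 'a list \<Rightarrow> 'a) \<Rightarrow> 'a rel \<Rightarrow> 'a rel \<Rightarrow> 'a set \<Rightarrow> 'a set \<Rightarrow> bool" where
  "trace A ar op \<delta> \<delta>' U N \<longleftrightarrow> (\<exists>b\<in>U. N = U \<inter> \<delta>' `` {b} \<and> \<not> (N \<times> N \<subseteq> \<delta>))"

inductive_set lat_pol :: "nat \<Rightarrow> (bool list \<Rightarrow> bool) set" for n where
  lat_proj: "i < n \<Longrightarrow> (\<lambda>xs. xs ! i) \<in> lat_pol n"
| lat_const: "(\<lambda>xs. c) \<in> lat_pol n"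
| lat_meet: "p \<in> lat_pol n \<Longrightarrow> q \<in> lat_pol n \<Longrightarrow> (\<lambda>xs. p xs \<and> q xs) \<in> lat_pol n"
| lat_join: "p \<in> lat_pol n \<Longrightarrow> q \<in> lat_pol n \<Longrightarrow> (\<lambda>xs. p xs \<or> q xs) \<in> lat_pol n"

text \<open>The algebra (A|N)/(\<delta>|N) is polynomially equivalent to the 2-element lattice:
there is a bijection h of N/\<delta> onto the lattice carrier such that the polynomial operations
of A|N (the restrictions to N of polynomials of A preserving N) induce on N/\<delta> exactly the
lattice polynomial operations.\<close>
definition induced_lattice :: "'a set \<Rightarrow> ('f \<Rightarrow> nat) \<Rightarrow> ('f \<Rightarrow> 'a list \<Rightarrow> 'a) \<Rightarrow> 'a rel \<Rightarrow> 'a set \<Rightarrow> bool" where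
  "induced_lattice A ar op \<delta> N \<longleftrightarrow> (\<exists>h :: 'a \<Rightarrow> bool.
     (\<forall>x\<in>N. \<forall>y\<in>N. (x, y) \<in> \<delta> \<longleftrightarrow> h x = h y) \<and> h ` N = UNIV \<and>
     (\<forall>n. (\<forall>p \<in> pol A ar op n. (\<forall>xs\<in>tuples N n. p xs \<in> N) \<longrightarrow>
             (\<exists>g \<in> lat_pol n. \<forall>xs\<in>tuples N n. h (p xs) = g (map h xs))) \<and>
          (\<forall>g \<in> lat_pol n. \<exists>p \<in> pol A ar op n. (\<forall>xs\<in>tuples N n. p xs \<in> N) \<and>
             (\<forall>xs\<in>tuples N n. h (p xs) = g (map h xs)))))"

definition type4 :: "'a set \<Rightarrow> ('f \<Rightarrow> nat) \<Rightarrow> ('f \<Rightarrow> 'a list \<Rightarrow> 'a) \<Rightarrow> 'a rel \<Rightarrow> 'a rel \<Rightarrow> bool" where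
  "type4 A ar op \<delta> \<delta>' \<longleftrightarrow> (\<exists>U N. minimal_set A ar op \<delta> \<delta>' U \<and> trace A ar op \<delta> \<delta>' U N \<and>
     induced_lattice A ar op \<delta> N)"

definition typ_sub4 :: "'a set \<Rightarrow> ('f \<Rightarrow> nat) \<Rightarrow> ('f \<Rightarrow> 'a list \<Rightarrow> 'a) \<Rightarrow> bool" where
  "typ_sub4 A ar op \<longleftrightarrow> (\<forall>\<delta> \<delta>'. covers A ar op \<delta> \<delta>' \<longrightarrow> type4 A ar op \<delta> \<delta>')"

text \<open>a \<le>_\<alpha> b with respect to the fixed labelled minimal set {z,u} (z = 0, u = 1).\<close>
definition leq_al :: "'a set \<Rightarrow> ('f \<Rightarrow> nat) \<Rightarrow> ('f \<Rightarrow> 'a list \<Rightarrow> 'a) \<Rightarrow> 'a \<Rightarrow> 'a \<Rightarrow> 'a \<Rightarrow> 'a \<Rightarrow> bool" where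
  "leq_al A ar op z u a b \<longleftrightarrow> (\<exists>f \<in> upol A ar op. f u = b \<and> f z = a)"

definition comp_al :: "'a set \<Rightarrow> ('f \<Rightarrow> nat) \<Rightarrow> ('f \<Rightarrow> 'a list \<Rightarrow> 'a) \<Rightarrow> 'a \<Rightarrow> 'a \<Rightarrow> 'a \<Rightarrow> 'a \<Rightarrow> bool" where
  "comp_al A ar op z u a b \<longleftrightarrow> (leq_al A ar op z u a b \<or> leq_al A ar op z u b a) \<and> a \<noteq> b"

end

theory Submission imports Defs begin

lemma pol_in_A:
  assumes alg: "algebra A ar op"
  shows "p \<in> pol A ar op n \<Longrightarrow> xs \<in> tuples A n \<Longrightarrow> p xs \<in> A"
proof (induction p rule: pol.induct)
  case (pol_proj i) then show ?case by (auto simp: tuples_def)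
next
  case (pol_const c) then show ?case by simp
next
  case (pol_app ps f)
  have "length (map (\<lambda>p. p xs) ps) = ar f \<and> set (map (\<lambda>p. p xs) ps) \<subseteq> A" using pol_app by auto
  then show ?case using alg unfolding algebra_def by blast
qed

lemma upol_in_A: "algebra A ar op \<Longrightarrow> h \<in> upol A ar op \<Longrightarrow> x \<in> A \<Longrightarrow> h x \<in> A"
  unfolding upol_def using pol_in_A[of A ar op] by (auto simp: tuples_def)

lemma upol_op:
  assumes "set hs \<subseteq> upol A ar op" "length hs = ar f"
  shows "(\<lambda>t. op f (map (\<lambda>h. h t) hs)) \<in> upol A ar op"
proof -
  define r where "r h = (SOME p. p \<in> pol A ar op 1 \<and> h = (\<lambda>x. p [x]))" for h
  have r: "r h \<in> pol A ar op 1 \<and> h = (\<lambda>x. r h [x])" if "h \<in> upol A ar op" for h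
  proof -
    have "\<exists>p. p \<in> pol A ar op 1 \<and> h = (\<lambda>x. p [x])" using that unfolding upol_def by blast
    then show ?thesis unfolding r_def by (rule someI_ex)
  qed
  have P: "(\<lambda>xs. op f (map (\<lambda>p. p xs) (map r hs))) \<in> pol A ar op 1"
    by (rule pol_app) (use assms r in auto)
  have "(\<lambda>t. op f (map (\<lambda>h. h t) hs)) = (\<lambda>x. (\<lambda>xs. op f (map (\<lambda>p. p xs) (map r hs))) [x])"
  proof
    fix t
    have "\<forall>x\<in>set hs. x t = r x [t]" using assms(1) r by (metis subsetD)
    then have "map (\<lambda>h. h t) hs = map (\<lambda>p. p [t]) (map r hs)"
      by (simp add: map_eq_conv)
    then show "op f (map (\<lambda>h. h t) hs) = (\<lambda>xs. op f (map (\<lambda>p. p xs) (map r hs))) [t]" by (simp del: map_map)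
  qed
  then show ?thesis using P unfolding upol_def
    by (intro CollectI exI[of _ "\<lambda>xs. op f (map (\<lambda>p. p xs) (map r hs))"]) simp
qed

lemma upol_const: "c \<in> A \<Longrightarrow> (\<lambda>x. c) \<in> upol A ar op"
  unfolding upol_def by (auto intro!: exI[of _ "\<lambda>xs. c"] pol_const)

lemma upol_id: "(\<lambda>x. x) \<in> upol A ar op"
  unfolding upol_def by (auto intro!: exI[of _ "\<lambda>xs. xs ! 0"] pol_proj)

lemma pol_subst:
  assumes hs: "set hs \<subseteq> upol A ar op" "length hs = n"
  shows "p \<in> pol A ar op n \<Longrightarrow> (\<lambda>t. p (map (\<lambda>h. h t) hs)) \<in> upol A ar op"
proof (induction p rule: pol.induct)
  case (pol_proj i)
  then have "(\<lambda>t. map (\<lambda>h. h t) hs ! i) = hs ! i" using hs by auto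
  then show ?case using pol_proj hs by auto
next
  case (pol_const c) then show ?case by (simp add: upol_const)
next
  case (pol_app ps f)
  let ?hs = "map (\<lambda>q t. q (map (\<lambda>h. h t) hs)) ps"
  have "(\<lambda>t. op f (map (\<lambda>h. h t) ?hs)) \<in> upol A ar op"
    by (rule upol_op) (use pol_app in auto)
  then show ?case by (simp add: o_def)
qed

lemma upol_comp: "f \<in> upol A ar op \<Longrightarrow> g \<in> upol A ar op \<Longrightarrow> (\<lambda>x. f (g x)) \<in> upol A ar op"
proof -
  assume f: "f \<in> upol A ar op" and g: "g \<in> upol A ar op"
  then obtain p where p: "p \<in> pol A ar op 1" "f = (\<lambda>x. p [x])" unfolding upol_def by blast
  have "(\<lambda>t. p (map (\<lambda>h. h t) [g])) \<in> upol A ar op"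
    by (rule pol_subst[OF _ _ p(1)]) (use g in auto)
  then show ?thesis using p by simp
qed

lemma pol_con:
  assumes alg: "algebra A ar op" and c: "con A ar op \<theta>"
  shows "p \<in> pol A ar op n \<Longrightarrow> xs \<in> tuples A n \<Longrightarrow> ys \<in> tuples A n
     \<Longrightarrow> list_all2 (\<lambda>x y. (x, y) \<in> \<theta>) xs ys \<Longrightarrow> (p xs, p ys) \<in> \<theta>"
proof (induction p rule: pol.induct)
  case (pol_proj i) then show ?case using list_all2_nthD[of "\<lambda>x y. (x,y)\<in>\<theta>"] by (auto simp: tuples_def)
next
  case (pol_const c') then show ?case using c by (auto simp: con_def equiv_def refl_on_def)
next
  case (pol_app ps f)
  have "(op f (map (\<lambda>p. p xs) ps), op f (map (\<lambda>p. p ys) ps)) \<in> \<theta>"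
    using c unfolding con_def
    apply (elim conjE)
    apply (erule allE[of _ f], erule allE[of _ "map (\<lambda>p. p xs) ps"], erule allE[of _ "map (\<lambda>p. p ys) ps"])
    apply (erule mp)
    using pol_app pol_in_A[OF alg]
    by (auto simp: tuples_def list_all2_map1 list_all2_map2 intro!: list.rel_refl_strong)
  then show ?case by simp
qed

lemma upol_con: "algebra A ar op \<Longrightarrow> con A ar op \<theta> \<Longrightarrow> h \<in> upol A ar op \<Longrightarrow> (x, y) \<in> \<theta> \<Longrightarrow> (h x, h y) \<in> \<theta>"
  unfolding upol_def
  apply clarify
  apply (rule pol_con, assumption+)
  by (auto simp: tuples_def con_def equiv_def)

lemma lift_rel:
  assumes step: "\<And>pre a b post. set pre \<subseteq> A \<Longrightarrow> set post \<subseteq> A \<Longrightarrow> length pre + Suc (length post) = n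
        \<Longrightarrow> (a, b) \<in> T \<Longrightarrow> (F (pre @ a # post), F (pre @ b # post)) \<in> T"
    and tr: "trans T" and rf: "\<And>zs. zs \<in> tuples A n \<Longrightarrow> (F zs, F zs) \<in> T"
  shows "list_all2 (\<lambda>x y. (x, y) \<in> T) xs ys \<Longrightarrow> set pre \<subseteq> A \<Longrightarrow> set xs \<subseteq> A \<Longrightarrow> set ys \<subseteq> A
     \<Longrightarrow> length pre + length xs = n \<Longrightarrow> (F (pre @ xs), F (pre @ ys)) \<in> T"
proof (induction xs ys arbitrary: pre rule: list_all2_induct)
  case Nil then show ?case using rf by (auto simp: tuples_def)
next
  case (Cons x xs y ys)
  have 1: "(F (pre @ x # xs), F (pre @ y # xs)) \<in> T"
    by (rule step) (use Cons in auto)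
  have 2: "(F ((pre @ [y]) @ xs), F ((pre @ [y]) @ ys)) \<in> T"
    by (rule Cons.IH) (use Cons in auto)
  show ?case using 1 2 tr by (auto elim: transE)
qed

definition Lrel where
  "Lrel A ar op z1 u1 = {(a, b). a \<in> A \<and> b \<in> A \<and> leq_al A ar op z1 u1 a b}"

definition goodF where
  "goodF A ar op n F \<longleftrightarrow> (\<forall>pre post g. set pre \<subseteq> A \<and> set post \<subseteq> A \<and> length pre + Suc (length post) = n
       \<and> g \<in> upol A ar op \<longrightarrow> (\<lambda>t. F (pre @ g t # post)) \<in> upol A ar op)"

lemma subst_hs:
  assumes "set pre \<subseteq> A" "set post \<subseteq> A" "g \<in> upol A ar op"
  shows "set (map (\<lambda>c t. c) pre @ g # map (\<lambda>c t. c) post) \<subseteq> upol A ar op"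
    and "length (map (\<lambda>c t. c) pre @ g # map (\<lambda>c t. (c::'a)) post) = length pre + Suc (length post)"
    and "map (\<lambda>h. h t) (map (\<lambda>c t. c) pre @ g # map (\<lambda>c t. c) post) = pre @ g t # post"
  using assms upol_const[of _ A ar op] by (auto simp: o_def)

lemma goodF_op: "goodF A ar op (ar f) (op f)"
  unfolding goodF_def
proof (intro allI impI, elim conjE)
  fix pre post g assume a: "set pre \<subseteq> A" "set post \<subseteq> A" "length pre + Suc (length post) = ar f" "g \<in> upol A ar op"
  have "(\<lambda>t. op f (map (\<lambda>h. h t) (map (\<lambda>c t. c) pre @ g # map (\<lambda>c t. c) post))) \<in> upol A ar op"
    by (rule upol_op) (use subst_hs[OF a(1,2,4)] a(3) in auto)
  then show "(\<lambda>t. op f (pre @ g t # post)) \<in> upol A ar op" by (simp add: o_def)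
qed

lemma goodF_pol: "p \<in> pol A ar op n \<Longrightarrow> goodF A ar op n p"
  unfolding goodF_def
proof (intro allI impI, elim conjE)
  fix pre post g assume p: "p \<in> pol A ar op n" and a: "set pre \<subseteq> A" "set post \<subseteq> A" "length pre + Suc (length post) = n" "g \<in> upol A ar op"
  have "(\<lambda>t. p (map (\<lambda>h. h t) (map (\<lambda>c t. c) pre @ g # map (\<lambda>c t. c) post))) \<in> upol A ar op"
    by (rule pol_subst[OF _ _ p]) (use subst_hs[OF a(1,2,4)] a(3) in auto)
  then show "(\<lambda>t. p (pre @ g t # post)) \<in> upol A ar op" by (simp add: o_def)
qed

lemma step_L:
  assumes alg: "algebra A ar op" and zu: "z1 \<in> A" "u1 \<in> A" and g: "goodF A ar op n F"
    and a: "set pre \<subseteq> A" "set post \<subseteq> A" "length pre + Suc (length post) = n"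
    and ab: "(a, b) \<in> Lrel A ar op z1 u1"
  shows "(F (pre @ a # post), F (pre @ b # post)) \<in> Lrel A ar op z1 u1"
proof -
  obtain h where h: "h \<in> upol A ar op" "h u1 = b" "h z1 = a"
    using ab unfolding Lrel_def leq_al_def by blast
  have H: "(\<lambda>t. F (pre @ h t # post)) \<in> upol A ar op" using g a h(1) unfolding goodF_def by blast
  show ?thesis unfolding Lrel_def leq_al_def
    using H h upol_in_A[OF alg H] zu by (auto intro!: bexI[OF _ H])
qed

lemma Lrel_refl: "c \<in> A \<Longrightarrow> (c, c) \<in> Lrel A ar op z1 u1"
  unfolding Lrel_def leq_al_def using upol_const[of c A ar op] by auto

lemma step_Lplus:
  assumes alg: "algebra A ar op" and zu: "z1 \<in> A" "u1 \<in> A" and g: "goodF A ar op n F"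
    and a: "set pre \<subseteq> A" "set post \<subseteq> A" "length pre + Suc (length post) = n"
  shows "(a, b) \<in> (Lrel A ar op z1 u1)\<^sup>+ \<Longrightarrow> (F (pre @ a # post), F (pre @ b # post)) \<in> (Lrel A ar op z1 u1)\<^sup>+"
proof (induction b rule: trancl_induct)
  case (base y) then show ?case using step_L[OF assms] by blast
next
  case (step y z) then show ?case using step_L[OF assms, of y z] by (meson trancl.trancl_into_trancl)
qed

lemma step_Mplus:
  assumes alg: "algebra A ar op" and zu: "z1 \<in> A" "u1 \<in> A" and g: "goodF A ar op n F"
    and a: "set pre \<subseteq> A" "set post \<subseteq> A" "length pre + Suc (length post) = n"
  shows "(a, b) \<in> (Lrel A ar op z1 u1 \<union> (Lrel A ar op z1 u1)\<inverse>)\<^sup>+ \<Longrightarrow>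
    (F (pre @ a # post), F (pre @ b # post)) \<in> (Lrel A ar op z1 u1 \<union> (Lrel A ar op z1 u1)\<inverse>)\<^sup>+"
proof (induction b rule: trancl_induct)
  case (base y) then show ?case using step_L[OF assms, of a y] step_L[OF assms, of y a] by blast
next
  case (step y z)
  have "(F (pre @ y # post), F (pre @ z # post)) \<in> Lrel A ar op z1 u1 \<union> (Lrel A ar op z1 u1)\<inverse>"
    using step(2) step_L[OF assms, of y z] step_L[OF assms, of z y] by blast
  then show ?case using step(3) by (meson trancl.trancl_into_trancl)
qed

lemma con_Inter:
  assumes "S \<noteq> {}" "\<forall>\<theta>\<in>S. con A ar op \<theta>"
  shows "con A ar op (\<Inter>S)"
proof -
  obtain t where t: "t \<in> S" using assms(1) by blast
  have e: "equiv A (\<Inter>S)"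
  proof (rule equivI)
    show "\<Inter>S \<subseteq> A \<times> A" using t assms(2) unfolding con_def equiv_def by blast
    show "refl_on A (\<Inter>S)" using assms(2) by (auto simp: con_def equiv_def refl_on_def)
    show "sym (\<Inter>S)" using assms(2) unfolding con_def equiv_def sym_def by blast
    show "trans (\<Inter>S)" using assms(2) unfolding con_def equiv_def trans_def by blast
  qed
  have "(op f xs, op f ys) \<in> \<Inter>S"
    if "xs \<in> tuples A (ar f)" "ys \<in> tuples A (ar f)" "list_all2 (\<lambda>x y. (x, y) \<in> \<Inter>S) xs ys" for f xs ys
  proof
    fix \<theta> assume th: "\<theta> \<in> S"
    have "list_all2 (\<lambda>x y. (x, y) \<in> \<theta>) xs ys"
      using that(3) by (rule list_all2_mono) (use th in blast)
    then show "(op f xs, op f ys) \<in> \<theta>" using th assms(2) that(1,2) unfolding con_def by blast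
  qed
  then show ?thesis using e unfolding con_def by blast
qed

lemma chain_sep: "(x, y) \<in> R\<^sup>+ \<Longrightarrow> f x \<noteq> f y \<Longrightarrow> \<exists>c d. (c, d) \<in> R \<and> f c \<noteq> f d"
proof (induction rule: trancl_induct)
  case (base y) then show ?case by blast
next
  case (step y z) then show ?case by (cases "f y = f z") auto
qed

theorem lemma8p2:
  fixes A :: "'a set" and ar :: "'f \<Rightarrow> nat" and op :: "'f \<Rightarrow> 'a list \<Rightarrow> 'a"
    and \<alpha> \<beta> :: "'a rel" and z1 u1 :: 'a
  assumes alg: "algebra A ar op" and fin: "finite A"
    and cm: "cm_variety A ar op"
    and typ4: "typ_sub4 A ar op"
    and ji: "join_irreducible A ar op \<alpha>"
    and low: "covers A ar op \<beta> \<alpha>"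
    and U: "minimal_set A ar op \<beta> \<alpha> {z1, u1}" and oi: "z1 \<noteq> u1"
  shows "(\<forall>\<delta> \<delta>' a b. covers A ar op \<delta> \<delta>' \<and> \<delta>' \<subseteq> \<alpha> \<and> minimal_set A ar op \<delta> \<delta>' {a, b}
            \<longrightarrow> comp_al A ar op z1 u1 a b)
     \<and> (\<forall>a\<in>A. \<forall>x\<in>\<alpha> `` {a}. \<forall>y\<in>\<alpha> `` {a}.
            (x, y) \<in> {(u, v). u \<in> \<alpha> `` {a} \<and> v \<in> \<alpha> `` {a} \<and> comp_al A ar op z1 u1 u v}\<^sup>*)
     \<and> (\<forall>f\<in>upol A ar op. \<forall>a\<in>A. \<forall>b\<in>A. leq_al A ar op z1 u1 a b \<longrightarrow> leq_al A ar op z1 u1 (f a) (f b))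
     \<and> (\<forall>n. \<forall>p\<in>pol A ar op n. \<forall>xs\<in>tuples A n. \<forall>ys\<in>tuples A n.
            list_all2 (\<lambda>x y. (x, y) \<in> {(a, b). a \<in> A \<and> b \<in> A \<and> leq_al A ar op z1 u1 a b}\<^sup>+) xs ys
            \<longrightarrow> (p xs, p ys) \<in> {(a, b). a \<in> A \<and> b \<in> A \<and> leq_al A ar op z1 u1 a b}\<^sup>+)"
proof -
  let ?L = "Lrel A ar op z1 u1"
  let ?M = "(?L \<union> ?L\<inverse>)\<^sup>+"
  have ca: "con A ar op \<alpha>" and cb: "con A ar op \<beta>" and ba: "\<beta> \<subset> \<alpha>"
    and nobetween: "\<not> (\<exists>\<theta>. con A ar op \<theta> \<and> \<beta> \<subset> \<theta> \<and> \<theta> \<subset> \<alpha>)"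
    using low unfolding covers_def by auto
  have eqa: "equiv A \<alpha>" using ca unfolding con_def by blast
  have eqb: "equiv A \<beta>" using cb unfolding con_def by blast
  obtain f where f: "{z1, u1} = f ` A" "f \<in> upol A ar op"
    and nf: "\<not> ((\<lambda>(x, y). (f x, f y)) ` \<alpha> \<subseteq> \<beta>)"
    using U unfolding minimal_set_def U_sets_def by blast
  obtain x y where xy: "(x, y) \<in> \<alpha>" "(f x, f y) \<notin> \<beta>" using nf by auto
  have xyA: "x \<in> A" "y \<in> A" using xy(1) eqa unfolding equiv_def by auto
  have "f ` A \<subseteq> A" using upol_in_A[OF alg f(2)] by auto
  then have zuA: "z1 \<in> A" "u1 \<in> A" using f(1) by blast+
  have fxy: "(f x, f y) \<in> \<alpha>" using upol_con[OF alg ca f(2) xy(1)] .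
  have fne: "f x \<noteq> f y" using xy(2) eqb upol_in_A[OF alg f(2) xyA(1)]
    unfolding equiv_def refl_on_def by auto
  have fin2: "f x \<in> {z1, u1}" "f y \<in> {z1, u1}" using f(1) xyA by auto
  have zu_a: "(z1, u1) \<in> \<alpha>" and zu_nb: "(z1, u1) \<notin> \<beta>"
    using fin2 fne fxy xy(2) eqa eqb unfolding equiv_def sym_def by auto
  have L_a: "?L \<subseteq> \<alpha>"
  proof
    fix p assume "p \<in> ?L"
    then obtain c d g where p: "p = (c, d)" "g \<in> upol A ar op" "g u1 = d" "g z1 = c"
      unfolding Lrel_def leq_al_def by blast
    show "p \<in> \<alpha>" using upol_con[OF alg ca p(2) zu_a] p by simp
  qed
  have M_a: "?M \<subseteq> \<alpha>"
  proof -
    have "?L \<union> ?L\<inverse> \<subseteq> \<alpha>" using L_a eqa unfolding equiv_def sym_def by blast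
    then have "?M \<subseteq> \<alpha>\<^sup>+" by (meson subrelI trancl_mono)
    also have "\<alpha>\<^sup>+ = \<alpha>" using eqa unfolding equiv_def by (simp add: trancl_id)
    finally show ?thesis .
  qed
  have LA: "?L \<subseteq> A \<times> A" unfolding Lrel_def by auto
  have zuL: "(z1, u1) \<in> ?L" unfolding Lrel_def leq_al_def using zuA upol_id by force
  have cM: "con A ar op ?M"
  proof -
    have e: "equiv A ?M"
    proof (rule equivI)
      show "?M \<subseteq> A \<times> A" using LA by (intro trancl_subset_Sigma) auto
      show "refl_on A ?M" unfolding refl_on_def
      proof
        fix c assume "c \<in> A"
        then have "(c, c) \<in> ?L \<union> ?L\<inverse>" by (intro UnI1 Lrel_refl)
        then show "(c, c) \<in> ?M" by (rule r_into_trancl)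
      qed
      show "sym ?M" by (intro sym_trancl sym_Un_converse)
      show "trans ?M" by (rule trans_trancl)
    qed
    have "(op g xs, op g ys) \<in> ?M"
      if "xs \<in> tuples A (ar g)" "ys \<in> tuples A (ar g)" "list_all2 (\<lambda>x y. (x, y) \<in> ?M) xs ys" for g xs ys
    proof -
      have "(op g ([] @ xs), op g ([] @ ys)) \<in> ?M"
      proof (rule lift_rel[where A=A and n="ar g"])
        show "(op g (pre @ a # post), op g (pre @ b # post)) \<in> ?M"
          if "set pre \<subseteq> A" "set post \<subseteq> A" "length pre + Suc (length post) = ar g" "(a, b) \<in> ?M"
          for pre a b post
          using step_Mplus[OF alg zuA goodF_op that(1-3)] that(4) by blast
        show "trans ?M" by (rule trans_trancl)
        show "(op g zs, op g zs) \<in> ?M" if "zs \<in> tuples A (ar g)" for zs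
        proof -
          have "op g zs \<in> A" using alg that unfolding algebra_def tuples_def by blast
          then have "(op g zs, op g zs) \<in> ?L \<union> ?L\<inverse>" by (intro UnI1 Lrel_refl)
          then show ?thesis by (rule r_into_trancl)
        qed
      qed (use that in \<open>auto simp: tuples_def\<close>)
      then show ?thesis by simp
    qed
    then show ?thesis using e unfolding con_def by blast
  qed
  have zuM: "(z1, u1) \<in> ?M" using zuL by (intro r_into_trancl UnI1)
  have aM: "\<alpha> = ?M"
  proof -
    let ?S = "{\<theta>. con A ar op \<theta> \<and> \<beta> \<union> ?M \<subseteq> \<theta>}"
    have aS: "\<alpha> \<in> ?S" using ca ba M_a by auto
    have cJ: "con A ar op (\<Inter>?S)" by (rule con_Inter) (use aS in auto)
    have J1: "\<beta> \<subseteq> \<Inter>?S" "?M \<subseteq> \<Inter>?S" "\<Inter>?S \<subseteq> \<alpha>" using aS by auto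
    have J2: "\<beta> \<subset> \<Inter>?S" using J1 zuM zu_nb by blast
    have "\<Inter>?S = \<alpha>" using nobetween cJ J1 J2 by blast
    then have "\<alpha> = con_join A ar op \<beta> ?M" unfolding con_join_def by simp
    then have "\<alpha> = \<beta> \<or> \<alpha> = ?M" using ji cb cM unfolding join_irreducible_def by blast
    then show ?thesis using ba by blast
  qed
  have P1: "comp_al A ar op z1 u1 a b"
    if asm: "covers A ar op \<delta> \<delta>'" "\<delta>' \<subseteq> \<alpha>" "minimal_set A ar op \<delta> \<delta>' {a, b}" for \<delta> \<delta>' a b
  proof -
    obtain h where h: "{a, b} = h ` A" "h \<in> upol A ar op"
      and nh: "\<not> ((\<lambda>(x, y). (h x, h y)) ` \<delta>' \<subseteq> \<delta>)"
      using asm(3) unfolding minimal_set_def U_sets_def by blast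
    obtain x y where xy: "(x, y) \<in> \<delta>'" "(h x, h y) \<notin> \<delta>" using nh by auto
    have cd: "con A ar op \<delta>" using asm(1) unfolding covers_def by blast
    have xyM: "(x, y) \<in> ?M" using xy(1) asm(2) aM by blast
    have xyA: "x \<in> A" "y \<in> A" using xyM LA trancl_subset_Sigma[of "?L \<union> ?L\<inverse>" A] by auto
    have hne: "h x \<noteq> h y" using xy(2) cd upol_in_A[OF alg h(2) xyA(1)]
      unfolding con_def equiv_def refl_on_def by auto
    obtain c d where c: "(c, d) \<in> ?L \<union> ?L\<inverse>" "h c \<noteq> h d" using chain_sep[OF xyM hne] by blast
    have cdA: "c \<in> A" "d \<in> A" using c(1) LA by auto
    have hab: "h c \<in> {a, b}" "h d \<in> {a, b}" using h(1) cdA by auto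
    have anb: "a \<noteq> b" using hab c(2) by auto
    show ?thesis
    proof (cases "(c, d) \<in> ?L")
      case True
      then obtain g where g: "g \<in> upol A ar op" "g u1 = d" "g z1 = c"
        unfolding Lrel_def leq_al_def by blast
      have hg: "(\<lambda>x. h (g x)) \<in> upol A ar op" by (rule upol_comp[OF h(2) g(1)])
      have "leq_al A ar op z1 u1 (h c) (h d)" unfolding leq_al_def using hg g by auto
      then show ?thesis unfolding comp_al_def using hab c(2) anb by auto
    next
      case False
      then have "(d, c) \<in> ?L" using c(1) by auto
      then obtain g where g: "g \<in> upol A ar op" "g u1 = c" "g z1 = d"
        unfolding Lrel_def leq_al_def by blast
      have hg: "(\<lambda>x. h (g x)) \<in> upol A ar op" by (rule upol_comp[OF h(2) g(1)])
      have "leq_al A ar op z1 u1 (h d) (h c)" unfolding leq_al_def using hg g by auto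
      then show ?thesis unfolding comp_al_def using hab c(2) anb by auto
    qed
  qed
  have P2: "(x, y) \<in> {(u, v). u \<in> \<alpha> `` {a} \<and> v \<in> \<alpha> `` {a} \<and> comp_al A ar op z1 u1 u v}\<^sup>*"
    if "a \<in> A" "x \<in> \<alpha> `` {a}" "y \<in> \<alpha> `` {a}" for a x y
  proof -
    let ?C = "\<alpha> `` {a}"
    let ?T = "{(u, v). u \<in> ?C \<and> v \<in> ?C \<and> comp_al A ar op z1 u1 u v}"
    have clos: "v \<in> ?C" if "u \<in> ?C" "(u, v) \<in> \<alpha>" for u v
      using that eqa unfolding equiv_def trans_def by blast
    have edge: "v \<in> ?C \<and> (u, v) \<in> ?T\<^sup>*" if "u \<in> ?C" "(u, v) \<in> ?L \<union> ?L\<inverse>" for u v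
    proof -
      have "(u, v) \<in> \<alpha>" using that(2) M_a by blast
      then have vC: "v \<in> ?C" using clos that(1) by blast
      have "u = v \<or> comp_al A ar op z1 u1 u v"
        using that(2) unfolding comp_al_def Lrel_def by auto
      then show ?thesis using vC that(1) by auto
    qed
    have "(x', y') \<in> ?M \<Longrightarrow> x' \<in> ?C \<Longrightarrow> y' \<in> ?C \<and> (x', y') \<in> ?T\<^sup>*" for x' y'
    proof (induction y' rule: trancl_induct)
      case (base y) then show ?case using edge by blast
    next
      case (step y z)
      then show ?case using edge[of y z] by (meson rtrancl_trans)
    qed
    moreover have "(x, y) \<in> ?M"
    proof -
      have "(x, a) \<in> \<alpha>" "(a, y) \<in> \<alpha>" using that eqa unfolding equiv_def sym_def by auto
      then have "(x, y) \<in> \<alpha>" using eqa unfolding equiv_def trans_def by blast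
      then show ?thesis using aM by simp
    qed
    ultimately show ?thesis using that(2) by blast
  qed
  have P3: "leq_al A ar op z1 u1 (g a) (g b)"
    if asm: "g \<in> upol A ar op" "leq_al A ar op z1 u1 a b" for g a b
  proof -
    obtain k where k: "k \<in> upol A ar op" "k u1 = b" "k z1 = a" using asm(2) unfolding leq_al_def by blast
    show ?thesis unfolding leq_al_def using upol_comp[OF asm(1) k(1)] k by auto
  qed
  have P4: "(p xs, p ys) \<in> ?L\<^sup>+"
    if "p \<in> pol A ar op n" "xs \<in> tuples A n" "ys \<in> tuples A n" "list_all2 (\<lambda>x y. (x, y) \<in> ?L\<^sup>+) xs ys"
    for n p xs ys
  proof -
    have "(p ([] @ xs), p ([] @ ys)) \<in> ?L\<^sup>+"
    proof (rule lift_rel[where A=A and n=n])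
      show "(p (pre @ a # post), p (pre @ b # post)) \<in> ?L\<^sup>+"
        if "set pre \<subseteq> A" "set post \<subseteq> A" "length pre + Suc (length post) = n" "(a, b) \<in> ?L\<^sup>+"
        for pre a b post
        using step_Lplus[OF alg zuA goodF_pol[OF \<open>p \<in> pol A ar op n\<close>] that(1-3)] that(4) by blast
      show "trans (?L\<^sup>+)" by (rule trans_trancl)
      show "(p zs, p zs) \<in> ?L\<^sup>+" if "zs \<in> tuples A n" for zs
        using Lrel_refl[OF pol_in_A[OF alg \<open>p \<in> pol A ar op n\<close> that]] by (rule r_into_trancl)
    qed (use that in \<open>auto simp: tuples_def\<close>)
    then show ?thesis by simp
  qed
  have Leq: "?L = {(a, b). a \<in> A \<and> b \<in> A \<and> leq_al A ar op z1 u1 a b}" unfolding Lrel_def ..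
  show ?thesis
    using P1 P2 P3 P4 unfolding Leq by blast
qed

end
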